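(* Let $\mu>0$ and let $\mathcal{D}'_\mu$ be the class of random variables $D$ that are mixed Poisson$(X)$ with $\mathbb{P}(X=\lambda)=1-\mathbb{P}(X=0)=\mu/\lambda$ for some $\lambda\ge\mu$. Over $D\in\mathcal{D}'_\mu$, $q_D$ is minimized for $\lambda=\max(\mu,\mu_c)$, where $\mu_c$ is the largest real root of $2x=e^{x-1/2}$ ($\mu_c\approx1.756$).
   Context: For a non-negative real random variable $X$, $D$ is mixed Poisson$(X)$ if $\mathbb{P}(D=k)=\mathbb{E}(X^ke^{-X}/k!)$, $k\ge0$; its generating function is $f_D(s)=\mathbb{E}(e^{-(1-s)X})$ and $\bar f_D(s)=\mathbb{E}(Xe^{-(1-s)X})/\mathbb{E}(X)$. $z_D$ is the smallest root in $[0,1]$ of $s=\bar f_D(s)$ and $q_D=f_D(z_D)$. For $D$ in $\mathcal{D}'_\mu$ with parameter $\lambda$: $f_D(s)=1-\mu/\lambda+(\mu/\lambda)e^{-\lambda(1-s)}$ and $\bar f_D(s)=e^{-\lambda(1-s)}$. *)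

theory Defs
  imports "HOL-Probability.Probability"
begin

text \<open>Mixing variable X is a probability distribution on the reals (finite support suffices here).
  D = mixed Poisson(X). Generating functions of D as in the paper.\<close>

definition fD :: "real pmf \<Rightarrow> real \<Rightarrow> real" where
  "fD X s = measure_pmf.expectation X (\<lambda>x. exp (-(1 - s) * x))"

definition fbarD :: "real pmf \<Rightarrow> real \<Rightarrow> real" where
  "fbarD X s = measure_pmf.expectation X (\<lambda>x. x * exp (-(1 - s) * x))
               / measure_pmf.expectation X (\<lambda>x. x)"

definition zD :: "real pmf \<Rightarrow> real" where
  "zD X = (LEAST s. s \<in> {0..1} \<and> s = fbarD X s)"

definition qD :: "real pmf \<Rightarrow> real" where
  "qD X = fD X (zD X)"

definition Xmix :: "real \<Rightarrow> real \<Rightarrow> real pmf" where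
  "Xmix mu lam = map_pmf (\<lambda>b. if b then lam else 0) (bernoulli_pmf (mu / lam))"

definition mu_c :: real where
  "mu_c = (GREATEST x. 2 * x = exp (x - 1/2))"

end

theory Submission imports Defs begin


lemma E_Xmix:
  assumes "0 < mu" "mu \<le> lam"
  shows "measure_pmf.expectation (Xmix mu lam) f = mu/lam * f lam + (1 - mu/lam) * f 0"
proof -
  have "0 \<le> mu/lam" "mu/lam \<le> 1" using assms by auto
  then show ?thesis unfolding Xmix_def by (simp add: mult.commute)
qed

lemma fbar_Xmix:
  assumes "0 < mu" "mu \<le> lam"
  shows "fbarD (Xmix mu lam) s = exp (-(1 - s) * lam)"
  using assms unfolding fbarD_def by (simp add: E_Xmix)

lemma fD_Xmix:
  assumes "0 < mu" "mu \<le> lam"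
  shows "fD (Xmix mu lam) s = mu/lam * exp (-(1 - s) * lam) + (1 - mu/lam)"
  using assms unfolding fD_def by (simp add: E_Xmix mult.commute)

definition Z :: "real \<Rightarrow> real" where
  "Z lam = (LEAST s. s \<in> {0..1} \<and> s = exp (-(1 - s) * lam))"

lemma zD_Xmix:
  assumes "0 < mu" "mu \<le> lam"
  shows "zD (Xmix mu lam) = Z lam"
  using assms unfolding zD_def Z_def by (simp add: fbar_Xmix)

lemma Z_props:
  fixes lam :: real
  shows "Z lam \<in> {0..1} \<and> Z lam = exp (-(1 - Z lam) * lam) \<and>
     (\<forall>s\<in>{0..1}. s = exp (-(1 - s) * lam) \<longrightarrow> Z lam \<le> s)"
proof -
  define S where "S = {0..1} \<inter> {s::real. s = exp (-(1 - s) * lam)}"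
  have cl: "closed S" unfolding S_def
    by (intro closed_Int closed_atLeastAtMost closed_Collect_eq continuous_intros)
  have "1 \<in> S" unfolding S_def by auto
  then have ne: "S \<noteq> {}" by blast
  have bd: "bdd_below S" unfolding S_def by (rule bdd_belowI[of _ 0]) auto
  have inS: "Inf S \<in> S" by (rule closed_contains_Inf[OF ne bd cl])
  have low: "\<And>s. s \<in> S \<Longrightarrow> Inf S \<le> s" using bd by (simp add: cInf_lower)
  have "Z lam = Inf S" unfolding Z_def
    by (rule Least_equality) (use inS low in \<open>auto simp: S_def\<close>)
  then show ?thesis using inS low by (auto simp: S_def)
qed

lemma Z_le:
  assumes "s \<in> {0..1}" "exp (-(1 - s) * lam) \<le> s"
  shows "Z lam \<le> s"
proof -
  let ?f = "\<lambda>x::real. exp (-(1 - x) * lam) - x"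
  have "\<exists>x. 0 \<le> x \<and> x \<le> s \<and> ?f x = 0"
    by (rule IVT2') (use assms in \<open>auto intro!: continuous_intros\<close>)
  then obtain x where "0 \<le> x" "x \<le> s" "?f x = 0" by blast
  then have "x \<in> {0..1}" "x = exp (-(1 - x) * lam)" using assms(1) by auto
  then have "Z lam \<le> x" using Z_props[of lam] by blast
  then show ?thesis using \<open>x \<le> s\<close> by linarith
qed

lemma exp_strict: "x \<noteq> 0 \<Longrightarrow> 1 + x < exp (x::real)"
proof (cases "1 + x/2 \<ge> 0")
  case True
  assume "x \<noteq> 0"
  have "(1 + x/2)^2 \<le> exp (x/2) ^ 2"
    by (rule power_mono) (use True in auto)
  also have "\<dots> = exp x" by (simp add: exp_double[symmetric] power2_eq_square exp_add[symmetric])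
  finally have e: "(1 + x/2)^2 \<le> exp x" .
  have "(1 + x/2)^2 = 1 + x + x^2/4" by (simp add: power2_eq_square algebra_simps)
  moreover have "x^2 > 0" using \<open>x \<noteq> 0\<close> by simp
  ultimately show ?thesis using e by linarith
next
  case False
  then show ?thesis using exp_gt_zero[of x] by linarith
qed


lemma Z_c:
  assumes c: "2 * c = exp (c - 1/2)" "c > 1"
  shows "Z c = 1 / (2 * c)"
proof -
  let ?z = "1 / (2 * c)"
  have e: "exp (-(1 - ?z) * c) = ?z"
  proof -
    have "-(1 - ?z) * c = 1/2 - c" using c by (simp add: field_simps)
    moreover have "exp (1/2 - c) * exp (c - 1/2) = 1" by (simp add: exp_add[symmetric])
    then have "exp (1/2 - c) * (2 * c) = 1" using c by simp
    then have "exp (1/2 - c) = 1 / (2 * c)" using c by (simp add: field_simps)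
    ultimately show ?thesis by simp
  qed
  have z01: "?z \<in> {0..1}" using c by auto
  have "Z c \<le> ?z" using Z_le[OF z01] e by simp
  moreover have "?z \<le> Z c"
  proof (rule ccontr)
    assume "\<not> ?z \<le> Z c"
    then have lt: "Z c < ?z" by simp
    have zz: "Z c = exp (-(1 - Z c) * c)" using Z_props[of c] by blast
    have "exp (-(1 - Z c) * c) = exp (-(1 - ?z) * c) * exp ((Z c - ?z) * c)"
      by (simp add: exp_add[symmetric] algebra_simps)
    also have "\<dots> = ?z * exp ((Z c - ?z) * c)" using e by simp
    also have "\<dots> > ?z * (1 + (Z c - ?z) * c)"
      using exp_strict[of "(Z c - ?z) * c"] lt c by (intro mult_strict_left_mono) auto
    finally have "Z c > ?z * (1 + (Z c - ?z) * c)" using zz by simp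
    moreover have "?z * (1 + (Z c - ?z) * c) = ?z + (Z c - ?z) / 2" using c by (simp add: field_simps)
    ultimately have h: "?z + (Z c - ?z) / 2 < Z c" by metis
    have aux: "\<And>z w::real. z + (w - z) / 2 < w \<Longrightarrow> w < z \<Longrightarrow> False" by (simp add: field_simps)
    show False using aux[OF h lt] .
  qed
  ultimately show ?thesis by simp
qed

lemma mu_c_props: "2 * mu_c = exp (mu_c - 1/2) \<and> mu_c > 1"
proof -
  let ?m = "\<lambda>x::real. exp (x - 1/2) - 2 * x"
  have h1: "exp (1/2::real) < 2"
  proof -
    have "exp (1/2::real) ^ 2 = exp 1" by (simp add: power2_eq_square exp_add[symmetric])
    also have "\<dots> \<le> 3" by (rule exp_le)
    finally have "exp (1/2::real) ^ 2 < 2^2" by simp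
    then show ?thesis by (rule power_less_imp_less_base) simp
  qed
  have m1: "?m 1 < 0" using h1 by simp
  have m3: "?m 3 > 0"
  proof -
    have a: "exp (1::real) > 2" using exp_strict[of 1] by simp
    have b: "exp (1/2::real) \<ge> 3/2" using exp_ge_add_one_self[of "1/2::real"] by simp
    have "exp (5/2::real) = exp 1 * exp 1 * exp (1/2)" by (simp add: exp_add[symmetric])
    have c4: "exp 1 * exp 1 > (2::real) * 2" using a by (intro mult_strict_mono) auto
    have "exp 1 * exp 1 * exp (1/2) \<ge> exp 1 * exp 1 * (3/2::real)" using b by (intro mult_left_mono) auto
    then have "exp (5/2::real) > 6" using c4 \<open>exp (5/2::real) = _\<close> by linarith
    then show ?thesis by simp
  qed
  have "\<exists>x. 1 \<le> x \<and> x \<le> 3 \<and> ?m x = 0"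
    by (rule IVT') (use m1 m3 in \<open>auto intro!: continuous_intros\<close>)
  then obtain r where r: "1 \<le> r" "r \<le> 3" "?m r = 0" by blast
  have r1: "r > 1" using r m1 by (cases "r = 1") auto
  have req: "2 * r = exp (r - 1/2)" using r by simp
  have "mu_c = r" unfolding mu_c_def
  proof (rule Greatest_equality)
    show "2 * r = exp (r - 1/2)" by (rule req)
    fix x :: real assume x: "2 * x = exp (x - 1/2)"
    show "x \<le> r"
    proof (rule ccontr)
      assume "\<not> x \<le> r"
      then have xr: "x > r" by simp
      have "exp (x - 1/2) = exp (r - 1/2) * exp (x - r)" by (simp add: exp_add[symmetric])
      also have "\<dots> \<ge> exp (r - 1/2) * (1 + (x - r))"
        by (intro mult_left_mono) auto
      finally have "2 * x \<ge> 2 * r * (1 + (x - r))" using x req by simp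
      moreover have "(x - r) * (r - 1) > 0" using xr r1 by simp
      ultimately show False by (simp add: algebra_simps)
    qed
  qed
  then show ?thesis using req r1 by simp
qed

definition phi :: "real \<Rightarrow> real" where
  "phi t = (1 - exp (-t))^2 / t"

lemma phi_deriv:
  fixes t :: real
  assumes "t > 0"
  shows "DERIV phi t :> (1 - exp (-t)) * exp (-t) * (2 * t + 1 - exp t) / t^2"
proof -
  have d: "DERIV phi t :> ((2 * (1 - exp (-t)) * exp (-t)) * t - (1 - exp (-t))^2 * 1) / t^2"
    unfolding phi_def using assms
    by (auto intro!: derivative_eq_intros simp: power2_eq_square)
  have eq: "((2 * (1 - exp (-t)) * exp (-t)) * t - (1 - exp (-t))^2 * 1) / t^2
     = (1 - exp (-t)) * exp (-t) * (2 * t + 1 - exp t) / t^2"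
  proof -
    have "exp (-t) * exp t = 1" by (simp add: exp_minus)
    then show ?thesis by (simp add: algebra_simps power2_eq_square)
  qed
  show ?thesis by (subst eq[symmetric]) (rule d)
qed

lemma phi_deriv_sign:
  fixes t :: real
  assumes "t > 0"
  shows "(1 - exp (-t)) * exp (-t) * (2 * t + 1 - exp t) / t^2 \<ge> 0 \<longleftrightarrow> exp t \<le> 2 * t + 1"
proof -
  have "exp (-t) < 1" using exp_less_mono[of "-t" "0::real"] assms by simp
  then have "1 - exp (-t) > 0" by linarith
  then have p: "(1 - exp (-t)) * exp (-t) / t^2 > 0" using assms by simp
  have eq: "(1 - exp (-t)) * exp (-t) * (2 * t + 1 - exp t) / t^2 = ((1 - exp (-t)) * exp (-t) / t^2) * (2 * t + 1 - exp t)"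
    by simp
  have g: "\<And>P k::real. P > 0 \<Longrightarrow> (0 \<le> P * k \<longleftrightarrow> 0 \<le> k)" by (simp add: zero_le_mult_iff)
  show ?thesis unfolding eq by (subst g[OF p]) auto
qed

lemma phi_deriv_sign2:
  fixes t :: real
  assumes "t > 0"
  shows "(1 - exp (-t)) * exp (-t) * (2 * t + 1 - exp t) / t^2 \<le> 0 \<longleftrightarrow> exp t \<ge> 2 * t + 1"
proof -
  have "exp (-t) < 1" using exp_less_mono[of "-t" "0::real"] assms by simp
  then have "1 - exp (-t) > 0" by linarith
  then have p: "(1 - exp (-t)) * exp (-t) / t^2 > 0" using assms by simp
  have eq: "(1 - exp (-t)) * exp (-t) * (2 * t + 1 - exp t) / t^2 = ((1 - exp (-t)) * exp (-t) / t^2) * (2 * t + 1 - exp t)"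
    by simp
  have g: "\<And>P k::real. P > 0 \<Longrightarrow> (P * k \<le> 0 \<longleftrightarrow> k \<le> 0)" by (simp add: mult_le_0_iff)
  show ?thesis unfolding eq by (subst g[OF p]) auto
qed

lemma k_below:
  fixes T t :: real
  assumes T: "exp T = 2 * T + 1" "T > 0" and t: "0 \<le> t" "t \<le> T"
  shows "exp t \<le> 2 * t + 1"
proof -
  define a where "a = t / T"
  have a: "0 \<le> a" "a \<le> 1" using T t by (auto simp: a_def)
  have "exp ((1 - a) *\<^sub>R 0 + a *\<^sub>R T) \<le> (1 - a) * exp 0 + a * exp T"
    using convex_onD[OF exp_convex] a by blast
  moreover have "(1 - a) *\<^sub>R 0 + a *\<^sub>R T = t" using T by (simp add: a_def)
  moreover have "(1 - a) * exp 0 + a * exp T = 2 * t + 1" using T by (simp add: a_def field_simps)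
  ultimately show ?thesis by simp
qed

lemma k_above:
  fixes T t :: real
  assumes T: "exp T = 2 * T + 1" "T > 1/2" and t: "T \<le> t"
  shows "exp t \<ge> 2 * t + 1"
proof -
  have "exp t = exp T * exp (t - T)" by (simp add: exp_add[symmetric])
  also have "\<dots> \<ge> exp T * (1 + (t - T))" by (intro mult_left_mono) auto
  finally have "exp t \<ge> (2 * T + 1) * (1 + (t - T))" using T by simp
  moreover have "(2 * T + 1) * (1 + (t - T)) \<ge> 2 * t + 1"
  proof -
    have "(2 * T + 1) * (1 + (t - T)) = 2 * T + 1 + (2 * T + 1) * (t - T)" by (simp add: algebra_simps)
    moreover have "(2 * T + 1) * (t - T) \<ge> 2 * (t - T)" using T t by (intro mult_right_mono) auto
    ultimately show ?thesis by simp
  qed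
  ultimately show ?thesis by simp
qed

lemma phi_inc:
  fixes T a b :: real
  assumes T: "exp T = 2 * T + 1" "T > 1/2" and ab: "0 < a" "a \<le> b" "b \<le> T"
  shows "phi a \<le> phi b"
proof (rule DERIV_nonneg_imp_nondecreasing[OF ab(2)])
  fix x assume x: "a \<le> x" "x \<le> b"
  then have "x > 0" "exp x \<le> 2 * x + 1" using ab T k_below[of T x] by auto
  then show "\<exists>y. DERIV phi x :> y \<and> 0 \<le> y"
    using phi_deriv phi_deriv_sign by blast
qed

lemma phi_dec:
  fixes T a b :: real
  assumes T: "exp T = 2 * T + 1" "T > 1/2" and ab: "T \<le> a" "a \<le> b"
  shows "phi b \<le> phi a"
proof (rule DERIV_nonpos_imp_nonincreasing[OF ab(2)])
  fix x assume x: "a \<le> x" "x \<le> b"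
  then have "x > 0" "exp x \<ge> 2 * x + 1" using ab T k_above[of T x] by auto
  then show "\<exists>y. DERIV phi x :> y \<and> y \<le> 0"
    using phi_deriv phi_deriv_sign2 by blast
qed

lemma phi_Z:
  assumes "lam > 0" "1 - Z lam > 0"
  shows "(1 - Z lam) / lam = phi (lam * (1 - Z lam))"
proof -
  let ?y = "1 - Z lam"
  have "Z lam = exp (-(1 - Z lam) * lam)" using Z_props[of lam] by blast
  moreover have "-(1 - Z lam) * lam = -(lam * ?y)" by (simp add: algebra_simps)
  ultimately have "1 - exp (-(lam * ?y)) = ?y" by simp
  then show ?thesis unfolding phi_def using assms by (simp add: power2_eq_square)
qed

theorem lemma3p5:
  fixes mu :: real
  assumes "mu > 0"
  shows "\<forall>lam \<ge> mu. qD (Xmix mu (max mu mu_c)) \<le> qD (Xmix mu lam)"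
proof (intro allI impI)
  fix lam assume lam: "lam \<ge> mu"
  define c where "c = mu_c"
  have c: "2 * c = exp (c - 1/2)" "c > 1" using mu_c_props by (auto simp: c_def)
  define T where "T = c - 1/2"
  have T: "exp T = 2 * T + 1" "T > 1/2" using c by (auto simp: T_def)
  define l0 where "l0 = max mu c"
  have l0: "l0 \<ge> mu" "l0 > 0" using assms by (auto simp: l0_def)
  have q: "\<And>l. l \<ge> mu \<Longrightarrow> qD (Xmix mu l) = 1 - mu * ((1 - Z l) / l)"
  proof -
    fix l assume l: "l \<ge> mu"
    have "qD (Xmix mu l) = mu/l * exp (-(1 - Z l) * l) + (1 - mu/l)"
      unfolding qD_def using assms l by (simp add: zD_Xmix fD_Xmix)
    also have "\<dots> = mu/l * Z l + (1 - mu/l)" using Z_props[of l] by metis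
    also have "\<dots> = 1 - mu * ((1 - Z l) / l)" using assms l by (simp add: field_simps)
    finally show "qD (Xmix mu l) = 1 - mu * ((1 - Z l) / l)" .
  qed
  have Zc: "Z c = 1 / (2 * c)" using Z_c c by blast
  have "1 / (2 * c) < 1" using c by simp
  then have yc: "1 - Z c > 0" using Zc by simp
  have tc: "c * (1 - Z c) = T" using Zc c by (simp add: T_def field_simps)
  have mono: "\<And>a b. 0 < a \<Longrightarrow> a \<le> b \<Longrightarrow> Z b \<le> Z a"
  proof -
    fix a b :: real assume ab: "0 < a" "a \<le> b"
    have za: "Z a \<in> {0..1}" "Z a = exp (-(1 - Z a) * a)" using Z_props[of a] by blast+
    have "-(1 - Z a) * b \<le> -(1 - Z a) * a"
      using za ab by (intro mult_left_mono_neg) auto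
    then have "exp (-(1 - Z a) * b) \<le> exp (-(1 - Z a) * a)" by simp
    then have "exp (-(1 - Z a) * b) \<le> Z a" using za(2) by linarith
    then show "Z b \<le> Z a" using Z_le[OF za(1)] by blast
  qed
  have key: "(1 - Z lam) / lam \<le> (1 - Z l0) / l0"
  proof (cases "1 - Z lam > 0")
    case False
    then have "(1 - Z lam) / lam \<le> 0" using assms lam by (simp add: divide_nonpos_pos)
    moreover have "0 \<le> (1 - Z l0) / l0" using Z_props[of l0] l0 by simp
    ultimately show ?thesis by linarith
  next
    case True
    have lampos: "lam > 0" using assms lam by simp
    have t: "lam * (1 - Z lam) > 0" using True lampos by simp
    show ?thesis
    proof (cases "mu \<le> c")
      case True2: True
      then have "l0 = c" by (simp add: l0_def)
      then have r: "(1 - Z l0) / l0 = phi T" using phi_Z[of c] yc c tc by simp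
      have "phi (lam * (1 - Z lam)) \<le> phi T"
      proof (cases "lam * (1 - Z lam) \<le> T")
        case True
        then show ?thesis using phi_inc[OF T t] by simp
      next
        case False
        then show ?thesis using phi_dec[OF T, of T "lam * (1 - Z lam)"] by simp
      qed
      then show ?thesis using r phi_Z[OF lampos True] by simp
    next
      case False
      then have l0m: "l0 = mu" by (simp add: l0_def)
      have "Z mu \<le> Z c" using mono[of c mu] c False by simp
      then have ymu: "1 - Z mu \<ge> 1 - Z c" by simp
      have "Z lam \<le> Z mu" using mono[OF assms lam] .
      then have ylam: "1 - Z lam \<ge> 1 - Z mu" by simp
      have t0: "mu * (1 - Z mu) \<ge> T"
      proof -
        have "mu * (1 - Z mu) \<ge> c * (1 - Z c)"
          using False ymu yc assms by (intro mult_mono) auto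
        then show ?thesis using tc by simp
      qed
      have tt: "lam * (1 - Z lam) \<ge> mu * (1 - Z mu)"
        using lam ylam ymu yc assms by (intro mult_mono) auto
      have "phi (lam * (1 - Z lam)) \<le> phi (mu * (1 - Z mu))"
        using phi_dec[OF T t0 tt] .
      moreover have "(1 - Z mu) / mu = phi (mu * (1 - Z mu))" using phi_Z[of mu] assms ymu yc by simp
      ultimately show ?thesis using phi_Z[OF lampos True] l0m by simp
    qed
  qed
  have m: "mu * ((1 - Z lam) / lam) \<le> mu * ((1 - Z l0) / l0)"
    using key assms by (intro mult_left_mono) auto
  have "qD (Xmix mu l0) \<le> qD (Xmix mu lam)" using q[OF l0(1)] q[OF lam] m by linarith
  then show "qD (Xmix mu (max mu mu_c)) \<le> qD (Xmix mu lam)" unfolding l0_def c_def .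
qed

end
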